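(* For every set of formulas $\Gamma$ and every formula $\alpha$: if $\Gamma \vDash_{\bf Km} \alpha$ then $\Gamma \vdash_{\bf Km} \alpha$.
   Context: Formulas are built from a denumerable set of propositional variables $p_1,p_2,\ldots$ by the unary connectives $\neg$, $\Box$ and the binary connective $\to$; $For$ is the set of all formulas. Abbreviations: $\Diamond\alpha:=\neg\Box\neg\alpha$, $\alpha\vee\beta:=\neg\alpha\to\beta$, $\alpha\wedge\beta:=\neg(\alpha\to\neg\beta)$. Hilbert calculus ${\bf Km}$: axioms are all instances (over $For$) of the axiom schemas of a standard Hilbert calculus for classical propositional logic in the signature $\{\neg,\to\}$, together with all instances of: (K') $\Diamond\alpha\to(\Box(\alpha\to\beta)\to(\Box\alpha\to\Box\beta))$; (K1') $\Diamond\neg\beta\to(\Box(\alpha\to\beta)\to(\Diamond\alpha\to\Diamond\beta))$; (K2') $\Diamond\alpha\to(\Diamond(\alpha\to\beta)\to(\Box\alpha\to\Diamond\beta))$; (M3') $(\Diamond\alpha\vee\Diamond\neg\alpha)\to(\Diamond\beta\to\Diamond(\alpha\to\beta))$; (M4') $\Diamond\neg\beta\to(\Diamond\neg\alpha\to\Diamond(\alpha\to\beta))$; (I1) $(\Box\alpha\wedge\Box\neg\alpha)\to(\Box(\alpha\to\beta)\wedge\Box\neg(\alpha\to\beta))$; (I2) $(\Box\beta\wedge\Box\neg\beta)\to(\Box(\alpha\to\beta)\wedge\Box\neg(\alpha\to\beta))$; (M1) $\neg\Diamond\alpha\to\Box(\alpha\to\beta)$; (M2) $\Box\beta\to\Box(\alpha\to\beta)$;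 (DN1) $\Box\alpha\to\Box\neg\neg\alpha$; (DN2) $\Box\neg\neg\alpha\to\Box\alpha$. Modus ponens is the only inference rule; $\Gamma\vdash_{\bf Km}\alpha$ means there is a derivation of $\alpha$ from $\Gamma$. Nmatrix semantics: an Nmatrix has a domain $A$, a set $D\subseteq A$ of designated values and, for each connective, a multioperation assigning to each tuple of arguments a nonempty subset of $A$. A valuation is a map $v:For\to A$ with $v(\neg\alpha)\in\tilde\neg(v(\alpha))$, $v(\Box\alpha)\in\tilde\Box(v(\alpha))$, $v(\alpha\to\beta)\in v(\alpha)\tilde\to v(\beta)$. $\Gamma\vDash\alpha$ iff every valuation $v$ with $v(\gamma)\in D$ for all $\gamma\in\Gamma$ has $v(\alpha)\in D$. The Nmatrix for ${\bf Km}$ (consequence $\vDash_{\bf Km}$): domain $\{T^+,C^+,F^+,I^+,T^-,C^-,F^-,I^-\}$, designated set $+=\{T^+,C^+,F^+,I^+\}$, and $-=\{T^-,C^-,F^-,I^-\}$. Negation: $\tilde\neg T^+=\{F^-\}$, $\tilde\neg C^+=\{C^-\}$, $\tilde\neg F^+=\{T^-\}$, $\tilde\neg I^+=\{I^-\}$, $\tilde\neg T^-=\{F^+\}$, $\tilde\neg C^-=\{C^+\}$, $\tilde\neg F^-=\{T^+\}$, $\tilde\neg I^-=\{I^+\}$. Necessity: $\tilde\Box x=+$ if $x\in\{T^+,T^-,I^+,I^-\}$, and $\tilde\Box x=-$ otherwise. Implication (row $x$, column $y$ gives $x\tilde\to y$): $$\begin{array}{c|cccccccc} \to & T^+ & C^+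 & F^+ & I^+ & T^- & C^- & F^- & I^-\\\hline T^+ & \{T^+\}&\{C^+\}&\{F^+\}&\{I^+\}&\{T^-\}&\{C^-\}&\{F^-\}&\{I^-\}\\ C^+ & \{T^+\}&\{T^+,C^+\}&\{C^+\}&\{I^+\}&\{T^-\}&\{T^-,C^-\}&\{C^-\}&\{I^-\}\\ F^+ & \{T^+\}&\{T^+\}&\{T^+\}&\{I^+\}&\{T^-\}&\{T^-\}&\{T^-\}&\{I^-\}\\ I^+ & \{I^+\}&\{I^+\}&\{I^+\}&\{I^+\}&\{I^-\}&\{I^-\}&\{I^-\}&\{I^-\}\\ T^- & \{T^+\}&\{C^+\}&\{F^+\}&\{I^+\}&\{T^+\}&\{C^+\}&\{F^+\}&\{I^+\}\\ C^- & \{T^+\}&\{T^+,C^+\}&\{C^+\}&\{I^+\}&\{T^+\}&\{T^+,C^+\}&\{C^+\}&\{I^+\}\\ F^- & \{T^+\}&\{T^+\}&\{T^+\}&\{I^+\}&\{T^+\}&\{T^+\}&\{T^+\}&\{I^+\}\\ I^- & \{I^+\}&\{I^+\}&\{I^+\}&\{I^+\}&\{I^+\}&\{I^+\}&\{I^+\}&\{I^+\}\end{array}$$ *)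

theory Defs
  imports Main
begin

datatype form =
    Var nat
  | Neg form
  | Box form
  | Imp form form

definition Dia :: "form \<Rightarrow> form" where
  "Dia a = Neg (Box (Neg a))"

definition Or :: "form \<Rightarrow> form \<Rightarrow> form" where
  "Or a b = Imp (Neg a) b"

definition And :: "form \<Rightarrow> form \<Rightarrow> form" where
  "And a b = Neg (Imp a (Neg b))"

text \<open>Classical propositional axioms (Mendelson's system in the signature Neg, Imp),
  instantiated over all formulas.\<close>

inductive cpl_axiom :: "form \<Rightarrow> bool" where
  A1: "cpl_axiom (Imp a (Imp b a))"
| A2: "cpl_axiom (Imp (Imp a (Imp b c)) (Imp (Imp a b) (Imp a c)))"
| A3: "cpl_axiom (Imp (Imp (Neg b) (Neg a)) (Imp (Imp (Neg b) a) b))"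

inductive modal_axiom :: "form \<Rightarrow> bool" where
  K':  "modal_axiom (Imp (Dia a) (Imp (Box (Imp a b)) (Imp (Box a) (Box b))))"
| K1': "modal_axiom (Imp (Dia (Neg b)) (Imp (Box (Imp a b)) (Imp (Dia a) (Dia b))))"
| K2': "modal_axiom (Imp (Dia a) (Imp (Dia (Imp a b)) (Imp (Box a) (Dia b))))"
| M3': "modal_axiom (Imp (Or (Dia a) (Dia (Neg a))) (Imp (Dia b) (Dia (Imp a b))))"
| M4': "modal_axiom (Imp (Dia (Neg b)) (Imp (Dia (Neg a)) (Dia (Imp a b))))"
| I1:  "modal_axiom (Imp (And (Box a) (Box (Neg a))) (And (Box (Imp a b)) (Box (Neg (Imp a b)))))"
| I2:  "modal_axiom (Imp (And (Box b) (Box (Neg b))) (And (Box (Imp a b)) (Box (Neg (Imp a b)))))"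
| M1:  "modal_axiom (Imp (Neg (Dia a)) (Box (Imp a b)))"
| M2:  "modal_axiom (Imp (Box b) (Box (Imp a b)))"
| DN1: "modal_axiom (Imp (Box a) (Box (Neg (Neg a))))"
| DN2: "modal_axiom (Imp (Box (Neg (Neg a))) (Box a))"

definition Km_axiom :: "form \<Rightarrow> bool" where
  "Km_axiom a \<longleftrightarrow> cpl_axiom a \<or> modal_axiom a"

inductive Km_derives :: "form set \<Rightarrow> form \<Rightarrow> bool" where
  prem: "a \<in> \<Gamma> \<Longrightarrow> Km_derives \<Gamma> a"
| ax:   "Km_axiom a \<Longrightarrow> Km_derives \<Gamma> a"
| mp:   "Km_derives \<Gamma> a \<Longrightarrow> Km_derives \<Gamma> (Imp a b) \<Longrightarrow> Km_derives \<Gamma> b"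

text \<open>Tp = T+, Cp = C+, ..., Im = I-.\<close>

datatype val = Tp | Cp | Fp | Ip | Tm | Cm | Fm | Im

definition designated :: "val set" where
  "designated = {Tp, Cp, Fp, Ip}"

definition antidesignated :: "val set" where
  "antidesignated = {Tm, Cm, Fm, Im}"

fun neg_m :: "val \<Rightarrow> val set" where
  "neg_m Tp = {Fm}"
| "neg_m Cp = {Cm}"
| "neg_m Fp = {Tm}"
| "neg_m Ip = {Im}"
| "neg_m Tm = {Fp}"
| "neg_m Cm = {Cp}"
| "neg_m Fm = {Tp}"
| "neg_m Im = {Ip}"

definition box_m :: "val \<Rightarrow> val set" where
  "box_m x = (if x \<in> {Tp, Tm, Ip, Im} then designated else antidesignated)"

fun imp_m :: "val \<Rightarrow> val \<Rightarrow> val set" where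
  "imp_m Tp Tp = {Tp}" |
  "imp_m Tp Cp = {Cp}" |
  "imp_m Tp Fp = {Fp}" |
  "imp_m Tp Ip = {Ip}" |
  "imp_m Tp Tm = {Tm}" |
  "imp_m Tp Cm = {Cm}" |
  "imp_m Tp Fm = {Fm}" |
  "imp_m Tp Im = {Im}" |
  "imp_m Cp Tp = {Tp}" |
  "imp_m Cp Cp = {Tp, Cp}" |
  "imp_m Cp Fp = {Cp}" |
  "imp_m Cp Ip = {Ip}" |
  "imp_m Cp Tm = {Tm}" |
  "imp_m Cp Cm = {Tm, Cm}" |
  "imp_m Cp Fm = {Cm}" |
  "imp_m Cp Im = {Im}" |
  "imp_m Fp Tp = {Tp}" |
  "imp_m Fp Cp = {Tp}" |
  "imp_m Fp Fp = {Tp}" |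
  "imp_m Fp Ip = {Ip}" |
  "imp_m Fp Tm = {Tm}" |
  "imp_m Fp Cm = {Tm}" |
  "imp_m Fp Fm = {Tm}" |
  "imp_m Fp Im = {Im}" |
  "imp_m Ip Tp = {Ip}" |
  "imp_m Ip Cp = {Ip}" |
  "imp_m Ip Fp = {Ip}" |
  "imp_m Ip Ip = {Ip}" |
  "imp_m Ip Tm = {Im}" |
  "imp_m Ip Cm = {Im}" |
  "imp_m Ip Fm = {Im}" |
  "imp_m Ip Im = {Im}" |
  "imp_m Tm Tp = {Tp}" |
  "imp_m Tm Cp = {Cp}" |
  "imp_m Tm Fp = {Fp}" |
  "imp_m Tm Ip = {Ip}" |
  "imp_m Tm Tm = {Tp}" |
  "imp_m Tm Cm = {Cp}" |
  "imp_m Tm Fm = {Fp}" |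
  "imp_m Tm Im = {Ip}" |
  "imp_m Cm Tp = {Tp}" |
  "imp_m Cm Cp = {Tp, Cp}" |
  "imp_m Cm Fp = {Cp}" |
  "imp_m Cm Ip = {Ip}" |
  "imp_m Cm Tm = {Tp}" |
  "imp_m Cm Cm = {Tp, Cp}" |
  "imp_m Cm Fm = {Cp}" |
  "imp_m Cm Im = {Ip}" |
  "imp_m Fm Tp = {Tp}" |
  "imp_m Fm Cp = {Tp}" |
  "imp_m Fm Fp = {Tp}" |
  "imp_m Fm Ip = {Ip}" |
  "imp_m Fm Tm = {Tp}" |
  "imp_m Fm Cm = {Tp}" |
  "imp_m Fm Fm = {Tp}" |
  "imp_m Fm Im = {Ip}" |
  "imp_m Im Tp = {Ip}" |
  "imp_m Im Cp = {Ip}" |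
  "imp_m Im Fp = {Ip}" |
  "imp_m Im Ip = {Ip}" |
  "imp_m Im Tm = {Ip}" |
  "imp_m Im Cm = {Ip}" |
  "imp_m Im Fm = {Ip}" |
  "imp_m Im Im = {Ip}"

definition Km_valuation :: "(form \<Rightarrow> val) \<Rightarrow> bool" where
  "Km_valuation v \<longleftrightarrow>
     (\<forall>a. v (Neg a) \<in> neg_m (v a)) \<and>
     (\<forall>a. v (Box a) \<in> box_m (v a)) \<and>
     (\<forall>a b. v (Imp a b) \<in> imp_m (v a) (v b))"

definition Km_entails :: "form set \<Rightarrow> form \<Rightarrow> bool" where
  "Km_entails \<Gamma> a \<longleftrightarrow>
     (\<forall>v. Km_valuation v \<longrightarrow> (\<forall>g\<in>\<Gamma>. v g \<in> designated) \<longrightarrow> v a \<in> designated)"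

end

theory Submission
  imports Defs
begin

lemma deriv_mono: "Km_derives \<Gamma> a \<Longrightarrow> \<Gamma> \<subseteq> \<Delta> \<Longrightarrow> Km_derives \<Delta> a"
proof (induction rule: Km_derives.induct)
  case (prem a \<Gamma>)
  then show ?case by (intro Km_derives.prem) blast
next
  case (ax a \<Gamma>)
  then show ?case by (simp add: Km_derives.ax)
next
  case (mp \<Gamma> a b)
  then show ?case using Km_derives.mp[of \<Delta> a b] by blast
qed

lemma deriv_compact: "Km_derives \<Gamma> a \<Longrightarrow> \<exists>F. F \<subseteq> \<Gamma> \<and> finite F \<and> Km_derives F a"
proof (induction rule: Km_derives.induct)
  case (prem a \<Gamma>)
  then show ?case by (intro exI[of _ "{a}"]) (auto intro: Km_derives.prem)
next
  case (ax a \<Gamma>)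
  then show ?case by (intro exI[of _ "{}"]) (auto intro: Km_derives.ax)
next
  case (mp \<Gamma> a b)
  then obtain F1 F2 where "F1 \<subseteq> \<Gamma>" "finite F1" "Km_derives F1 a"
    "F2 \<subseteq> \<Gamma>" "finite F2" "Km_derives F2 (Imp a b)" by blast
  moreover have "Km_derives (F1 \<union> F2) b"
    using Km_derives.mp[OF deriv_mono[OF \<open>Km_derives F1 a\<close> Un_upper1] deriv_mono[OF \<open>Km_derives F2 (Imp a b)\<close> Un_upper2]] .
  ultimately show ?case
    by (intro exI[of _ "F1 \<union> F2"]) auto
qed

lemma dA1: "Km_derives \<Gamma> (Imp a (Imp b a))"
  by (rule Km_derives.ax) (simp add: Km_axiom_def cpl_axiom.intros)
lemma dA2: "Km_derives \<Gamma> (Imp (Imp a (Imp b c)) (Imp (Imp a b) (Imp a c)))"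
  by (rule Km_derives.ax) (simp add: Km_axiom_def cpl_axiom.intros)
lemma dA3: "Km_derives \<Gamma> (Imp (Imp (Neg b) (Neg a)) (Imp (Imp (Neg b) a) b))"
  by (rule Km_derives.ax) (simp add: Km_axiom_def cpl_axiom.intros)

lemmas MP = Km_derives.mp
lemmas PR = Km_derives.prem

lemma imp_self: "Km_derives \<Gamma> (Imp a a)"
proof -
  have 1: "Km_derives \<Gamma> (Imp (Imp a (Imp (Imp a a) a)) (Imp (Imp a (Imp a a)) (Imp a a)))" by (rule dA2)
  have 2: "Km_derives \<Gamma> (Imp (Imp a (Imp a a)) (Imp a a))" by (rule MP[OF dA1 1])
  show ?thesis by (rule MP[OF dA1 2])
qed

lemma deduction: "Km_derives (insert a \<Gamma>) b \<Longrightarrow> Km_derives \<Gamma> (Imp a b)"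
proof (induction "insert a \<Gamma>" b rule: Km_derives.induct)
  case (prem b)
  then show ?case
  proof
    assume "b = a" then show ?thesis using imp_self by simp
  next
    assume "b \<in> \<Gamma>" then show ?thesis by (rule MP[OF PR dA1])
  qed
next
  case (ax b)
  then show ?case by (rule MP[OF Km_derives.ax dA1])
next
  case (mp b c)
  have "Km_derives \<Gamma> (Imp (Imp a b) (Imp a c))" by (rule MP[OF mp(4) dA2])
  then show ?case by (rule MP[OF mp(2)])
qed

lemma raa: "Km_derives (insert (Neg b) \<Gamma>) c \<Longrightarrow> Km_derives (insert (Neg b) \<Gamma>) (Neg c) \<Longrightarrow> Km_derives \<Gamma> b"
proof -
  assume 1: "Km_derives (insert (Neg b) \<Gamma>) c" and 2: "Km_derives (insert (Neg b) \<Gamma>) (Neg c)"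
  have 3: "Km_derives \<Gamma> (Imp (Imp (Neg b) c) b)" by (rule MP[OF deduction[OF 2] dA3])
  show ?thesis by (rule MP[OF deduction[OF 1] 3])
qed

definition cons :: "form set \<Rightarrow> bool" where
  "cons S \<longleftrightarrow> \<not> (\<exists>c. Km_derives S c \<and> Km_derives S (Neg c))"

lemma incons_all: "Km_derives S c \<Longrightarrow> Km_derives S (Neg c) \<Longrightarrow> Km_derives S b"
  by (rule raa; erule deriv_mono; rule subset_insertI)

definition mk :: "bool \<Rightarrow> bool \<Rightarrow> bool \<Rightarrow> val" where
  "mk p B N = (if p then
      (if B then (if N then Ip else Tp) else (if N then Fp else Cp))
    else
      (if B then (if N then Im else Tm) else (if N then Fm else Cm)))"

lemma mk_imp_raw:
  "\<forall>pa pb Ba Na Bb Nb Bi Ni.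
   (\<not> Na \<longrightarrow> Bi \<longrightarrow> Ba \<longrightarrow> Bb) \<longrightarrow>
   (\<not> Bb \<longrightarrow> Bi \<longrightarrow> \<not> Na \<longrightarrow> \<not> Nb) \<longrightarrow>
   (\<not> Na \<longrightarrow> \<not> Ni \<longrightarrow> Ba \<longrightarrow> \<not> Nb) \<longrightarrow>
   ((\<not> Na \<or> \<not> Ba) \<longrightarrow> \<not> Nb \<longrightarrow> \<not> Ni) \<longrightarrow>
   (\<not> Bb \<longrightarrow> \<not> Ba \<longrightarrow> \<not> Ni) \<longrightarrow>
   (Ba \<and> Na \<longrightarrow> Bi \<and> Ni) \<longrightarrow>
   (Bb \<and> Nb \<longrightarrow> Bi \<and> Ni) \<longrightarrow>
   (Na \<longrightarrow> Bi) \<longrightarrow>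
   (Bb \<longrightarrow> Bi) \<longrightarrow>
   mk (\<not> pa \<or> pb) Bi Ni \<in> imp_m (mk pa Ba Na) (mk pb Bb Nb)"
  unfolding mk_def
  apply (simp only: all_bool_eq)
  apply (simp only: if_True if_False simp_thms imp_m.simps)
  apply (simp only: insert_iff singleton_iff val.distinct simp_thms)
  done

lemma mk_imp:
  assumes "\<not> Na \<longrightarrow> Bi \<longrightarrow> Ba \<longrightarrow> Bb"
    and "\<not> Bb \<longrightarrow> Bi \<longrightarrow> \<not> Na \<longrightarrow> \<not> Nb"
    and "\<not> Na \<longrightarrow> \<not> Ni \<longrightarrow> Ba \<longrightarrow> \<not> Nb"
    and "(\<not> Na \<or> \<not> Ba) \<longrightarrow> \<not> Nb \<longrightarrow> \<not> Ni"
    and "\<not> Bb \<longrightarrow> \<not> Ba \<longrightarrow> \<not> Ni"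
    and "Ba \<and> Na \<longrightarrow> Bi \<and> Ni"
    and "Bb \<and> Nb \<longrightarrow> Bi \<and> Ni"
    and "Na \<longrightarrow> Bi"
    and "Bb \<longrightarrow> Bi"
  shows "mk (\<not> pa \<or> pb) Bi Ni \<in> imp_m (mk pa Ba Na) (mk pb Bb Nb)"
  by (rule mk_imp_raw[rule_format, OF assms[rule_format]])

locale maxcons =
  fixes D :: "form set"
  assumes cD: "cons D"
  and maxD: "\<And>X. D \<subseteq> X \<Longrightarrow> cons X \<Longrightarrow> X = D"
begin

lemma closed: "Km_derives D b \<Longrightarrow> b \<in> D"
proof -
  assume b: "Km_derives D b"
  have "cons (insert b D)"
    unfolding cons_def
  proof
    assume "\<exists>c. Km_derives (insert b D) c \<and> Km_derives (insert b D) (Neg c)"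
    then obtain c where c1: "Km_derives (insert b D) c" and c2: "Km_derives (insert b D) (Neg c)" by blast
    have "Km_derives D c" by (rule MP[OF b deduction[OF c1]])
    moreover have "Km_derives D (Neg c)" by (rule MP[OF b deduction[OF c2]])
    ultimately show False using cD cons_def by blast
  qed
  then have "insert b D = D" using maxD by blast
  then show ?thesis by blast
qed

lemma neg_iff: "Neg b \<in> D \<longleftrightarrow> b \<notin> D"
proof
  assume "Neg b \<in> D"
  then show "b \<notin> D" using cD PR[of b D] PR[of "Neg b" D] unfolding cons_def by blast
next
  assume nb: "b \<notin> D"
  show "Neg b \<in> D"
  proof (rule ccontr)
    assume nnb: "Neg b \<notin> D"
    have "\<not> cons (insert (Neg b) D)"
      using maxD[of "insert (Neg b) D"] nnb by blast
    then obtain c where "Km_derives (insert (Neg b) D) c" "Km_derives (insert (Neg b) D) (Neg c)"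
      unfolding cons_def by blast
    then have "Km_derives D b" by (rule raa)
    then show False using closed nb by blast
  qed
qed

lemma imp_iff: "Imp a b \<in> D \<longleftrightarrow> (a \<notin> D \<or> b \<in> D)"
proof
  assume "Imp a b \<in> D"
  then show "a \<notin> D \<or> b \<in> D" using closed MP[OF PR[of a D] PR[of "Imp a b" D]] by blast
next
  assume h: "a \<notin> D \<or> b \<in> D"
  show "Imp a b \<in> D"
  proof (cases "b \<in> D")
    case True
    then show ?thesis using closed MP[OF PR[of b D] dA1[of D b a]] by blast
  next
    case False
    then have "Neg a \<in> D" using h neg_iff by blast
    then have "Km_derives (insert a D) b"
      using incons_all[of "insert a D" a b] PR[of a "insert a D"] PR[of "Neg a" "insert a D"] by blast
    then show ?thesis using deduction closed by blast
  qed
qed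

lemma ax_in: "Km_axiom x \<Longrightarrow> x \<in> D"
  using closed Km_derives.ax[of x D] by blast

lemma max_in: "modal_axiom x \<Longrightarrow> x \<in> D"
  using ax_in Km_axiom_def by blast

definition vv :: "form \<Rightarrow> val" where
  "vv b = mk (b \<in> D) (Box b \<in> D) (Box (Neg b) \<in> D)"

lemma dn: "Box (Neg (Neg a)) \<in> D \<longleftrightarrow> Box a \<in> D"
  using max_in[OF modal_axiom.DN1[of a]] max_in[OF modal_axiom.DN2[of a]] by (auto simp: imp_iff)

lemma vv_neg: "vv (Neg a) \<in> neg_m (vv a)"
  using neg_iff[of a] dn[of a] unfolding vv_def mk_def by (auto split: if_splits)

lemma vv_box: "vv (Box a) \<in> box_m (vv a)"
  unfolding vv_def mk_def box_m_def designated_def antidesignated_def by (auto split: if_splits)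

lemma vv_imp: "vv (Imp a b) \<in> imp_m (vv a) (vv b)"
proof -
  note ii = imp_iff neg_iff Dia_def Or_def And_def dn
  have K': "Box (Neg a) \<notin> D \<longrightarrow> Box (Imp a b) \<in> D \<longrightarrow> Box a \<in> D \<longrightarrow> Box b \<in> D"
    using max_in[OF modal_axiom.K'[of a b]] by (auto simp: ii)
  have K1': "Box b \<notin> D \<longrightarrow> Box (Imp a b) \<in> D \<longrightarrow> Box (Neg a) \<notin> D \<longrightarrow> Box (Neg b) \<notin> D"
    using max_in[OF modal_axiom.K1'[of b a]] by (auto simp: ii)
  have K2': "Box (Neg a) \<notin> D \<longrightarrow> Box (Neg (Imp a b)) \<notin> D \<longrightarrow> Box a \<in> D \<longrightarrow> Box (Neg b) \<notin> D"
    using max_in[OF modal_axiom.K2'[of a b]] by (auto simp: ii)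
  have M3': "(Box (Neg a) \<notin> D \<or> Box a \<notin> D) \<longrightarrow> Box (Neg b) \<notin> D \<longrightarrow> Box (Neg (Imp a b)) \<notin> D"
    using max_in[OF modal_axiom.M3'[of a b]] by (auto simp: ii)
  have M4': "Box b \<notin> D \<longrightarrow> Box a \<notin> D \<longrightarrow> Box (Neg (Imp a b)) \<notin> D"
    using max_in[OF modal_axiom.M4'[of b a]] by (auto simp: ii)
  have I1: "Box a \<in> D \<and> Box (Neg a) \<in> D \<longrightarrow> Box (Imp a b) \<in> D \<and> Box (Neg (Imp a b)) \<in> D"
    using max_in[OF modal_axiom.I1[of a b]] by (auto simp: ii)
  have I2: "Box b \<in> D \<and> Box (Neg b) \<in> D \<longrightarrow> Box (Imp a b) \<in> D \<and> Box (Neg (Imp a b)) \<in> D"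
    using max_in[OF modal_axiom.I2[of b a]] by (auto simp: ii)
  have M1: "Box (Neg a) \<in> D \<longrightarrow> Box (Imp a b) \<in> D"
    using max_in[OF modal_axiom.M1[of a b]] by (auto simp: ii)
  have M2: "Box b \<in> D \<longrightarrow> Box (Imp a b) \<in> D"
    using max_in[OF modal_axiom.M2[of b a]] by (auto simp: ii)
  have im: "Imp a b \<in> D \<longleftrightarrow> (a \<notin> D \<or> b \<in> D)" by (rule imp_iff)
  show ?thesis
    unfolding vv_def im
    by (rule mk_imp) (use K' K1' K2' M3' M4' I1 I2 M1 M2 in blast)+
qed

lemma vv_val: "Km_valuation vv"
  unfolding Km_valuation_def using vv_neg vv_box vv_imp by blast

lemma vv_des: "vv b \<in> designated \<longleftrightarrow> b \<in> D"
  unfolding vv_def mk_def designated_def by (auto split: if_splits)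

end

theorem mainTheorem2:
  fixes \<Gamma> :: "form set" and \<alpha> :: form
  shows "Km_entails \<Gamma> \<alpha> \<Longrightarrow> Km_derives \<Gamma> \<alpha>"
proof (rule ccontr)
  assume ent: "Km_entails \<Gamma> \<alpha>" and nd: "\<not> Km_derives \<Gamma> \<alpha>"
  define G0 where "G0 = insert (Neg \<alpha>) \<Gamma>"
  have c0: "cons G0" unfolding cons_def G0_def using raa[of \<alpha> \<Gamma>] nd by blast
  define A where "A = {S. G0 \<subseteq> S \<and> cons S}"
  have "\<exists>M\<in>A. \<forall>X\<in>A. M \<subseteq> X \<longrightarrow> X = M"
  proof (rule subset_Zorn_nonempty)
    show "A \<noteq> {}" using c0 A_def by blast
  next
    fix C assume ne: "C \<noteq> {}" and ch: "subset.chain A C"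
    have CA: "C \<subseteq> A" using ch by (simp add: subset.chain_def)
    have "G0 \<subseteq> \<Union>C" using ne CA A_def by blast
    moreover have "cons (\<Union>C)"
      unfolding cons_def
    proof
      assume "\<exists>c. Km_derives (\<Union>C) c \<and> Km_derives (\<Union>C) (Neg c)"
      then obtain c where d1: "Km_derives (\<Union>C) c" and d2: "Km_derives (\<Union>C) (Neg c)" by blast
      obtain F1 where F1: "F1 \<subseteq> \<Union>C" "finite F1" "Km_derives F1 c" using deriv_compact[OF d1] by blast
      obtain F2 where F2: "F2 \<subseteq> \<Union>C" "finite F2" "Km_derives F2 (Neg c)" using deriv_compact[OF d2] by blast
      obtain B where B: "B \<in> C" "F1 \<union> F2 \<subseteq> B"
        using finite_subset_Union_chain[of "F1 \<union> F2" C A] F1 F2 ne ch by auto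
      have "Km_derives B c" using B F1 deriv_mono[of F1 c B] by blast
      moreover have "Km_derives B (Neg c)" using B F2 deriv_mono[of F2 "Neg c" B] by blast
      moreover have "cons B" using B CA A_def by blast
      ultimately show False unfolding cons_def by blast
    qed
    ultimately show "\<Union>C \<in> A" using A_def by blast
  qed
  then obtain D where DA: "D \<in> A" and Dmax: "\<forall>X\<in>A. D \<subseteq> X \<longrightarrow> X = D" by blast
  interpret m: maxcons D
  proof
    show "cons D" using DA A_def by blast
    fix X assume "D \<subseteq> X" "cons X"
    then show "X = D" using Dmax DA A_def by blast
  qed
  have "\<forall>g\<in>\<Gamma>. m.vv g \<in> designated" using DA A_def G0_def m.vv_des by blast
  then have "m.vv \<alpha> \<in> designated" using ent m.vv_val Km_entails_def by blast
  then have "\<alpha> \<in> D" using m.vv_des by blast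
  moreover have "Neg \<alpha> \<in> D" using DA A_def G0_def by blast
  ultimately show False using m.neg_iff by blast
qed

end
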